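(* Let $G$ be a bus graph containing an $(A,B)$-perp with vertices $x,y,z,A,A',B,B',C$ as defined below, and let $\Gamma$ be any realization of $G$. Then (1) $\Gamma(B)$ and $\Gamma(B')$ are parallel; (2) $\Gamma(A)$ and $\Gamma(B)$ are perpendicular; (3) $\Gamma(A)$ and $\Gamma(A')$ are parallel.
   Context: A bus graph is a finite bipartite graph $G=(\mathcal{B},\mathcal{C};\mathcal{E})$ with $\deg(c)\le 4$ for all $c\in\mathcal{C}$. A realization $\Gamma$ of $G$ in the integer grid is a drawing such that: (1) each $B\in\mathcal{B}$ is drawn as a closed line segment $\Gamma(B)$ along a grid line (a "bus"); (2) each $c\in\mathcal{C}$ is drawn as a grid point $\Gamma(c)$; (3) each edge $(B,c)\in\mathcal{E}$ is drawn as a closed line segment along a grid line between a point of $\Gamma(B)$ and $\Gamma(c)$, perpendicular to $\Gamma(B)$, containing no connectors or buses other than $\Gamma(B)$ and $\Gamma(c)$ (edges may cross other edges); (4) no two buses or connectors intersect. An $(A,B)$-perp is a bus graph component consisting of three distinct $\mathcal{C}$-vertices $x,y,z$, five distinct $\mathcal{B}$-vertices $A,A',B,B',C$, and the twelve edges $(A,x),(A',x),(B,x),(B',x)$, $(A,y),(A',y),(B,y),(C,y)$, $(A,z),(A',z),(B',z),(C,z)$. *)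

theory Defs
  imports "HOL-Analysis.Analysis"
begin

definition bus_graph :: "'b set \<Rightarrow> 'c set \<Rightarrow> ('b \<times> 'c) set \<Rightarrow> bool" where
  "bus_graph Bs Cs E \<longleftrightarrow> finite Bs \<and> finite Cs \<and> E \<subseteq> Bs \<times> Cs
     \<and> (\<forall>c\<in>Cs. card {B. (B, c) \<in> E} \<le> 4)"

datatype orientation = Hor | Ver

text \<open>A bus drawing: a closed segment along a grid line. If horizontal, it is
  the segment from (lo, lev) to (hi, lev); if vertical, from (lev, lo) to (lev, hi).\<close>

record bus_drawing =
  ori :: orientation
  lev :: int
  lo :: int
  hi :: int

definition pt :: "int \<times> int \<Rightarrow> real \<times> real" where
  "pt p = (real_of_int (fst p), real_of_int (snd p))"

definition bus_pts :: "bus_drawing \<Rightarrow> (real \<times> real) set" where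
  "bus_pts S = (case ori S of
      Hor \<Rightarrow> {(t, real_of_int (lev S)) | t. real_of_int (lo S) \<le> t \<and> t \<le> real_of_int (hi S)}
    | Ver \<Rightarrow> {(real_of_int (lev S), t) | t. real_of_int (lo S) \<le> t \<and> t \<le> real_of_int (hi S)})"

definition foot :: "bus_drawing \<Rightarrow> int \<times> int \<Rightarrow> int \<times> int" where
  "foot S q = (case ori S of Hor \<Rightarrow> (fst q, lev S) | Ver \<Rightarrow> (lev S, snd q))"

text \<open>An edge from bus S to connector point q can be drawn perpendicular to S
  iff the foot of the perpendicular lies on S; the drawing is then the closed
  segment between the foot and q.\<close>

definition edge_attachable :: "bus_drawing \<Rightarrow> int \<times> int \<Rightarrow> bool" where
  "edge_attachable S q \<longleftrightarrow> pt (foot S q) \<in> bus_pts S"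

definition edge_seg :: "bus_drawing \<Rightarrow> int \<times> int \<Rightarrow> (real \<times> real) set" where
  "edge_seg S q = closed_segment (pt (foot S q)) (pt q)"

definition realization ::
  "'b set \<Rightarrow> 'c set \<Rightarrow> ('b \<times> 'c) set \<Rightarrow> ('b \<Rightarrow> bus_drawing) \<Rightarrow> ('c \<Rightarrow> int \<times> int) \<Rightarrow> bool" where
  "realization Bs Cs E \<Gamma>b \<Gamma>c \<longleftrightarrow>
     (\<forall>B\<in>Bs. lo (\<Gamma>b B) \<le> hi (\<Gamma>b B))
   \<and> (\<forall>(B, c)\<in>E.
        edge_attachable (\<Gamma>b B) (\<Gamma>c c)
      \<and> (\<forall>B'\<in>Bs. B' \<noteq> B \<longrightarrow> edge_seg (\<Gamma>b B) (\<Gamma>c c) \<inter> bus_pts (\<Gamma>b B') = {})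
      \<and> (\<forall>c'\<in>Cs. c' \<noteq> c \<longrightarrow> pt (\<Gamma>c c') \<notin> edge_seg (\<Gamma>b B) (\<Gamma>c c)))
   \<and> (\<forall>B1\<in>Bs. \<forall>B2\<in>Bs. B1 \<noteq> B2 \<longrightarrow> bus_pts (\<Gamma>b B1) \<inter> bus_pts (\<Gamma>b B2) = {})
   \<and> (\<forall>c1\<in>Cs. \<forall>c2\<in>Cs. c1 \<noteq> c2 \<longrightarrow> \<Gamma>c c1 \<noteq> \<Gamma>c c2)
   \<and> (\<forall>B\<in>Bs. \<forall>c\<in>Cs. pt (\<Gamma>c c) \<notin> bus_pts (\<Gamma>b B))"

definition AB_perp ::
  "'b set \<Rightarrow> 'c set \<Rightarrow> ('b \<times> 'c) set \<Rightarrow> 'c \<Rightarrow> 'c \<Rightarrow> 'c \<Rightarrow> 'b \<Rightarrow> 'b \<Rightarrow> 'b \<Rightarrow> 'b \<Rightarrow> 'b \<Rightarrow> bool" where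
  "AB_perp Bs Cs E x y z A A' B B' C \<longleftrightarrow>
     x \<in> Cs \<and> y \<in> Cs \<and> z \<in> Cs \<and> distinct [x, y, z]
   \<and> A \<in> Bs \<and> A' \<in> Bs \<and> B \<in> Bs \<and> B' \<in> Bs \<and> C \<in> Bs \<and> distinct [A, A', B, B', C]
   \<and> {(A, x), (A', x), (B, x), (B', x),
      (A, y), (A', y), (B, y), (C, y),
      (A, z), (A', z), (B', z), (C, z)} \<subseteq> E"

end

theory Submission
  imports Defs
begin

lemma seg_snd:
  fixes u t v :: real
  assumes "u \<le> t" "t \<le> v"
  shows "((a::real), t) \<in> closed_segment (a,u) (a,v)"
proof (cases "u = v")
  case True then have "t = u" using assms by linarith
  then show ?thesis using True by simp
next
  case False
  then have "u < v" using assms by simp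
  define w where "w = (t-u)/(v-u)"
  have hw: "w*(v-u) = t-u" using \<open>u < v\<close> by (simp add: w_def)
  have "(a, t) = (1 - w) *\<^sub>R (a,u) + w *\<^sub>R (a,v)"
    using hw by (simp add: algebra_simps)
  moreover have "0 \<le> w \<and> w \<le> 1" using assms \<open>u < v\<close> by (simp add: w_def field_simps)
  ultimately show ?thesis unfolding closed_segment_def by blast
qed

lemma seg_fst:
  fixes u t v :: real
  assumes "u \<le> t" "t \<le> v"
  shows "(t, (a::real)) \<in> closed_segment (u,a) (v,a)"
proof (cases "u = v")
  case True then have "t = u" using assms by linarith
  then show ?thesis using True by simp
next
  case False
  then have "u < v" using assms by simp
  define w where "w = (t-u)/(v-u)"
  have hw: "w*(v-u) = t-u" using \<open>u < v\<close> by (simp add: w_def)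
  have "(t, a) = (1 - w) *\<^sub>R (u,a) + w *\<^sub>R (v,a)"
    using hw by (simp add: algebra_simps)
  moreover have "0 \<le> w \<and> w \<le> 1" using assms \<open>u < v\<close> by (simp add: w_def field_simps)
  ultimately show ?thesis unfolding closed_segment_def by blast
qed

lemma real_edge:
  assumes "realization Bs Cs E \<Gamma>b \<Gamma>c" "(B, c) \<in> E"
  shows "edge_attachable (\<Gamma>b B) (\<Gamma>c c)
      \<and> (\<forall>B'\<in>Bs. B' \<noteq> B \<longrightarrow> edge_seg (\<Gamma>b B) (\<Gamma>c c) \<inter> bus_pts (\<Gamma>b B') = {})
      \<and> (\<forall>c'\<in>Cs. c' \<noteq> c \<longrightarrow> pt (\<Gamma>c c') \<notin> edge_seg (\<Gamma>b B) (\<Gamma>c c))"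
  using bspec[OF conjunct1[OF conjunct2[OF assms(1)[unfolded realization_def]]] assms(2)]
  by simp

lemma pair_hor:
  assumes R: "realization Bs Cs E \<Gamma>b \<Gamma>c"
    and e1: "(B1, c) \<in> E" and e2: "(B2, c) \<in> E" and b1: "B1 \<in> Bs" and b2: "B2 \<in> Bs"
    and ne: "B1 \<noteq> B2" and cc: "c \<in> Cs"
    and o1: "ori (\<Gamma>b B1) = Hor" and o2: "ori (\<Gamma>b B2) = Hor"
  shows "(lev (\<Gamma>b B1) - snd (\<Gamma>c c)) * (lev (\<Gamma>b B2) - snd (\<Gamma>c c)) < 0"
proof -
  obtain q1 q2 where q: "\<Gamma>c c = (q1, q2)" by fastforce
  define l1 where "l1 = lev (\<Gamma>b B1)"
  define l2 where "l2 = lev (\<Gamma>b B2)"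
  have bp1: "\<And>a b. ((real_of_int a, real_of_int b) \<in> bus_pts (\<Gamma>b B1)) = (b = l1 \<and> lo (\<Gamma>b B1) \<le> a \<and> a \<le> hi (\<Gamma>b B1))"
    using o1 by (auto simp: bus_pts_def l1_def)
  have bp2: "\<And>a b. ((real_of_int a, real_of_int b) \<in> bus_pts (\<Gamma>b B2)) = (b = l2 \<and> lo (\<Gamma>b B2) \<le> a \<and> a \<le> hi (\<Gamma>b B2))"
    using o2 by (auto simp: bus_pts_def l2_def)
  have att1: "lo (\<Gamma>b B1) \<le> q1 \<and> q1 \<le> hi (\<Gamma>b B1)"
    using conjunct1[OF real_edge[OF R e1]] o1 q bp1 by (simp add: edge_attachable_def foot_def pt_def l1_def)
  have att2: "lo (\<Gamma>b B2) \<le> q1 \<and> q1 \<le> hi (\<Gamma>b B2)"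
    using conjunct1[OF real_edge[OF R e2]] o2 q bp2 by (simp add: edge_attachable_def foot_def pt_def l2_def)
  have np1: "pt (\<Gamma>c c) \<notin> bus_pts (\<Gamma>b B1)" using R b1 cc by (auto simp: realization_def)
  have np2: "pt (\<Gamma>c c) \<notin> bus_pts (\<Gamma>b B2)" using R b2 cc by (auto simp: realization_def)
  have n1: "l1 \<noteq> q2" using np1 q bp1 att1 by (auto simp: pt_def)
  have n2: "l2 \<noteq> q2" using np2 q bp2 att2 by (auto simp: pt_def)
  have neq: "l1 \<noteq> l2"
  proof
    assume "l1 = l2"
    then have "pt (q1, l1) \<in> bus_pts (\<Gamma>b B1) \<inter> bus_pts (\<Gamma>b B2)"
      using bp1 bp2 att1 att2 by (simp add: pt_def)
    moreover have "bus_pts (\<Gamma>b B1) \<inter> bus_pts (\<Gamma>b B2) = {}"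
      using R b1 b2 ne by (simp add: realization_def)
    ultimately show False by blast
  qed
  have es1: "edge_seg (\<Gamma>b B1) (\<Gamma>c c) \<inter> bus_pts (\<Gamma>b B2) = {}"
    using bspec[OF conjunct1[OF conjunct2[OF real_edge[OF R e1]]] b2] ne by simp
  have es2: "edge_seg (\<Gamma>b B2) (\<Gamma>c c) \<inter> bus_pts (\<Gamma>b B1) = {}"
    using bspec[OF conjunct1[OF conjunct2[OF real_edge[OF R e2]]] b1] ne by simp
  have ed1: "edge_seg (\<Gamma>b B1) (\<Gamma>c c) = closed_segment (real_of_int q1, real_of_int l1) (real_of_int q1, real_of_int q2)"
    using o1 q by (simp add: edge_seg_def foot_def pt_def l1_def)
  have ed2: "edge_seg (\<Gamma>b B2) (\<Gamma>c c) = closed_segment (real_of_int q1, real_of_int l2) (real_of_int q1, real_of_int q2)"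
    using o2 q by (simp add: edge_seg_def foot_def pt_def l2_def)
  have m2: "(real_of_int q1, real_of_int l2) \<in> bus_pts (\<Gamma>b B2)" using bp2 att2 by simp
  have m1: "(real_of_int q1, real_of_int l1) \<in> bus_pts (\<Gamma>b B1)" using bp1 att1 by simp
  have "\<not> (l1 \<le> l2 \<and> l2 \<le> q2)"
  proof
    assume h: "l1 \<le> l2 \<and> l2 \<le> q2"
    then have "(real_of_int q1, real_of_int l2) \<in> edge_seg (\<Gamma>b B1) (\<Gamma>c c)"
      unfolding ed1 by (intro seg_snd) auto
    then show False using es1 m2 by blast
  qed
  moreover have "\<not> (q2 \<le> l2 \<and> l2 \<le> l1)"
  proof
    assume h: "q2 \<le> l2 \<and> l2 \<le> l1"
    then have "(real_of_int q1, real_of_int l2) \<in> edge_seg (\<Gamma>b B1) (\<Gamma>c c)"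
      unfolding ed1 by (subst closed_segment_commute, intro seg_snd) auto
    then show False using es1 m2 by blast
  qed
  moreover have "\<not> (l2 \<le> l1 \<and> l1 \<le> q2)"
  proof
    assume h: "l2 \<le> l1 \<and> l1 \<le> q2"
    then have "(real_of_int q1, real_of_int l1) \<in> edge_seg (\<Gamma>b B2) (\<Gamma>c c)"
      unfolding ed2 by (intro seg_snd) auto
    then show False using es2 m1 by blast
  qed
  moreover have "\<not> (q2 \<le> l1 \<and> l1 \<le> l2)"
  proof
    assume h: "q2 \<le> l1 \<and> l1 \<le> l2"
    then have "(real_of_int q1, real_of_int l1) \<in> edge_seg (\<Gamma>b B2) (\<Gamma>c c)"
      unfolding ed2 by (subst closed_segment_commute, intro seg_snd) auto
    then show False using es2 m1 by blast
  qed
  ultimately have "(l1 < q2 \<and> q2 < l2) \<or> (l2 < q2 \<and> q2 < l1)" using n1 n2 neq by linarith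
  then show ?thesis unfolding l1_def[symmetric] l2_def[symmetric] q snd_conv
    by (metis mult_pos_neg mult_neg_pos diff_gt_0_iff_gt diff_less_0_iff_less)
qed

lemma pair_ver:
  assumes R: "realization Bs Cs E \<Gamma>b \<Gamma>c"
    and e1: "(B1, c) \<in> E" and e2: "(B2, c) \<in> E" and b1: "B1 \<in> Bs" and b2: "B2 \<in> Bs"
    and ne: "B1 \<noteq> B2" and cc: "c \<in> Cs"
    and o1: "ori (\<Gamma>b B1) = Ver" and o2: "ori (\<Gamma>b B2) = Ver"
  shows "(lev (\<Gamma>b B1) - fst (\<Gamma>c c)) * (lev (\<Gamma>b B2) - fst (\<Gamma>c c)) < 0"
proof -
  obtain q1 q2 where q: "\<Gamma>c c = (q1, q2)" by fastforce
  define l1 where "l1 = lev (\<Gamma>b B1)"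
  define l2 where "l2 = lev (\<Gamma>b B2)"
  have bp1: "\<And>a b. ((real_of_int a, real_of_int b) \<in> bus_pts (\<Gamma>b B1)) = (a = l1 \<and> lo (\<Gamma>b B1) \<le> b \<and> b \<le> hi (\<Gamma>b B1))"
    using o1 by (auto simp: bus_pts_def l1_def)
  have bp2: "\<And>a b. ((real_of_int a, real_of_int b) \<in> bus_pts (\<Gamma>b B2)) = (a = l2 \<and> lo (\<Gamma>b B2) \<le> b \<and> b \<le> hi (\<Gamma>b B2))"
    using o2 by (auto simp: bus_pts_def l2_def)
  have att1: "lo (\<Gamma>b B1) \<le> q2 \<and> q2 \<le> hi (\<Gamma>b B1)"
    using conjunct1[OF real_edge[OF R e1]] o1 q bp1 by (simp add: edge_attachable_def foot_def pt_def l1_def)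
  have att2: "lo (\<Gamma>b B2) \<le> q2 \<and> q2 \<le> hi (\<Gamma>b B2)"
    using conjunct1[OF real_edge[OF R e2]] o2 q bp2 by (simp add: edge_attachable_def foot_def pt_def l2_def)
  have np1: "pt (\<Gamma>c c) \<notin> bus_pts (\<Gamma>b B1)" using R b1 cc by (auto simp: realization_def)
  have np2: "pt (\<Gamma>c c) \<notin> bus_pts (\<Gamma>b B2)" using R b2 cc by (auto simp: realization_def)
  have n1: "l1 \<noteq> q1" using np1 q bp1 att1 by (auto simp: pt_def)
  have n2: "l2 \<noteq> q1" using np2 q bp2 att2 by (auto simp: pt_def)
  have neq: "l1 \<noteq> l2"
  proof
    assume "l1 = l2"
    then have "pt (l1, q2) \<in> bus_pts (\<Gamma>b B1) \<inter> bus_pts (\<Gamma>b B2)"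
      using bp1 bp2 att1 att2 by (simp add: pt_def)
    moreover have "bus_pts (\<Gamma>b B1) \<inter> bus_pts (\<Gamma>b B2) = {}"
      using R b1 b2 ne by (simp add: realization_def)
    ultimately show False by blast
  qed
  have es1: "edge_seg (\<Gamma>b B1) (\<Gamma>c c) \<inter> bus_pts (\<Gamma>b B2) = {}"
    using bspec[OF conjunct1[OF conjunct2[OF real_edge[OF R e1]]] b2] ne by simp
  have es2: "edge_seg (\<Gamma>b B2) (\<Gamma>c c) \<inter> bus_pts (\<Gamma>b B1) = {}"
    using bspec[OF conjunct1[OF conjunct2[OF real_edge[OF R e2]]] b1] ne by simp
  have ed1: "edge_seg (\<Gamma>b B1) (\<Gamma>c c) = closed_segment (real_of_int l1, real_of_int q2) (real_of_int q1, real_of_int q2)"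
    using o1 q by (simp add: edge_seg_def foot_def pt_def l1_def)
  have ed2: "edge_seg (\<Gamma>b B2) (\<Gamma>c c) = closed_segment (real_of_int l2, real_of_int q2) (real_of_int q1, real_of_int q2)"
    using o2 q by (simp add: edge_seg_def foot_def pt_def l2_def)
  have m2: "(real_of_int l2, real_of_int q2) \<in> bus_pts (\<Gamma>b B2)" using bp2 att2 by simp
  have m1: "(real_of_int l1, real_of_int q2) \<in> bus_pts (\<Gamma>b B1)" using bp1 att1 by simp
  have "\<not> (l1 \<le> l2 \<and> l2 \<le> q1)"
  proof
    assume h: "l1 \<le> l2 \<and> l2 \<le> q1"
    then have "(real_of_int l2, real_of_int q2) \<in> edge_seg (\<Gamma>b B1) (\<Gamma>c c)"
      unfolding ed1 by (intro seg_fst) auto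
    then show False using es1 m2 by blast
  qed
  moreover have "\<not> (q1 \<le> l2 \<and> l2 \<le> l1)"
  proof
    assume h: "q1 \<le> l2 \<and> l2 \<le> l1"
    then have "(real_of_int l2, real_of_int q2) \<in> edge_seg (\<Gamma>b B1) (\<Gamma>c c)"
      unfolding ed1 by (subst closed_segment_commute, intro seg_fst) auto
    then show False using es1 m2 by blast
  qed
  moreover have "\<not> (l2 \<le> l1 \<and> l1 \<le> q1)"
  proof
    assume h: "l2 \<le> l1 \<and> l1 \<le> q1"
    then have "(real_of_int l1, real_of_int q2) \<in> edge_seg (\<Gamma>b B2) (\<Gamma>c c)"
      unfolding ed2 by (intro seg_fst) auto
    then show False using es2 m1 by blast
  qed
  moreover have "\<not> (q1 \<le> l1 \<and> l1 \<le> l2)"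
  proof
    assume h: "q1 \<le> l1 \<and> l1 \<le> l2"
    then have "(real_of_int l1, real_of_int q2) \<in> edge_seg (\<Gamma>b B2) (\<Gamma>c c)"
      unfolding ed2 by (subst closed_segment_commute, intro seg_fst) auto
    then show False using es2 m1 by blast
  qed
  ultimately have "(l1 < q1 \<and> q1 < l2) \<or> (l2 < q1 \<and> q1 < l1)" using n1 n2 neq by linarith
  then show ?thesis unfolding l1_def[symmetric] l2_def[symmetric] q fst_conv
    by (metis mult_pos_neg mult_neg_pos diff_gt_0_iff_gt diff_less_0_iff_less)
qed


lemma three_same:
  assumes R: "realization Bs Cs E \<Gamma>b \<Gamma>c" and cc: "c \<in> Cs"
    and e: "(B1, c) \<in> E" "(B2, c) \<in> E" "(B3, c) \<in> E"
    and b: "B1 \<in> Bs" "B2 \<in> Bs" "B3 \<in> Bs"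
    and d: "B1 \<noteq> B2" "B1 \<noteq> B3" "B2 \<noteq> B3"
  shows "\<not> (ori (\<Gamma>b B1) = ori (\<Gamma>b B2) \<and> ori (\<Gamma>b B2) = ori (\<Gamma>b B3))"
proof
  assume h: "ori (\<Gamma>b B1) = ori (\<Gamma>b B2) \<and> ori (\<Gamma>b B2) = ori (\<Gamma>b B3)"
  have key: "\<And>p q r :: int. p * q < 0 \<Longrightarrow> p * r < 0 \<Longrightarrow> q * r < 0 \<Longrightarrow> False"
    by (auto simp: mult_less_0_iff)
  show False
  proof (cases "ori (\<Gamma>b B1)")
    case Hor
    then show False using h key pair_hor[OF R e(1) e(2) b(1) b(2) d(1) cc]
      pair_hor[OF R e(1) e(3) b(1) b(3) d(2) cc] pair_hor[OF R e(2) e(3) b(2) b(3) d(3) cc] by metis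
  next
    case Ver
    then show False using h key pair_ver[OF R e(1) e(2) b(1) b(2) d(1) cc]
      pair_ver[OF R e(1) e(3) b(1) b(3) d(2) cc] pair_ver[OF R e(2) e(3) b(2) b(3) d(3) cc] by metis
  qed
qed

theorem lemma3:
  fixes Bs :: "'b set" and Cs :: "'c set" and E :: "('b \<times> 'c) set"
    and \<Gamma>b :: "'b \<Rightarrow> bus_drawing" and \<Gamma>c :: "'c \<Rightarrow> int \<times> int"
  assumes "bus_graph Bs Cs E"
    and "AB_perp Bs Cs E x y z A A' B B' C"
    and "realization Bs Cs E \<Gamma>b \<Gamma>c"
  shows "ori (\<Gamma>b B) = ori (\<Gamma>b B') \<and> ori (\<Gamma>b A) \<noteq> ori (\<Gamma>b B) \<and> ori (\<Gamma>b A) = ori (\<Gamma>b A')"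
proof -
  note R = assms(3)
  have P: "x \<in> Cs" "y \<in> Cs" "z \<in> Cs" "A \<in> Bs" "A' \<in> Bs" "B \<in> Bs" "B' \<in> Bs" "C \<in> Bs"
    "A \<noteq> A'" "A \<noteq> B" "A \<noteq> B'" "A \<noteq> C" "A' \<noteq> B" "A' \<noteq> B'" "A' \<noteq> C"
    "B \<noteq> B'" "B \<noteq> C" "B' \<noteq> C"
    "(A, x) \<in> E" "(A', x) \<in> E" "(B, x) \<in> E" "(B', x) \<in> E"
    "(A, y) \<in> E" "(A', y) \<in> E" "(B, y) \<in> E" "(C, y) \<in> E"
    "(A, z) \<in> E" "(A', z) \<in> E" "(B', z) \<in> E" "(C, z) \<in> E"
    using assms(2) unfolding AB_perp_def by auto
  have x1: "\<not> (ori (\<Gamma>b A) = ori (\<Gamma>b A') \<and> ori (\<Gamma>b A') = ori (\<Gamma>b B))"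
    by (rule three_same[OF R P(1)]) (use P in auto)
  have x2: "\<not> (ori (\<Gamma>b A) = ori (\<Gamma>b A') \<and> ori (\<Gamma>b A') = ori (\<Gamma>b B'))"
    by (rule three_same[OF R P(1)]) (use P in auto)
  have x3: "\<not> (ori (\<Gamma>b A) = ori (\<Gamma>b B) \<and> ori (\<Gamma>b B) = ori (\<Gamma>b B'))"
    by (rule three_same[OF R P(1)]) (use P in auto)
  have x4: "\<not> (ori (\<Gamma>b A') = ori (\<Gamma>b B) \<and> ori (\<Gamma>b B) = ori (\<Gamma>b B'))"
    by (rule three_same[OF R P(1)]) (use P in auto)
  have y1: "\<not> (ori (\<Gamma>b A) = ori (\<Gamma>b A') \<and> ori (\<Gamma>b A') = ori (\<Gamma>b C))"
    by (rule three_same[OF R P(2)]) (use P in auto)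
  have y2: "\<not> (ori (\<Gamma>b A) = ori (\<Gamma>b B) \<and> ori (\<Gamma>b B) = ori (\<Gamma>b C))"
    by (rule three_same[OF R P(2)]) (use P in auto)
  have y3: "\<not> (ori (\<Gamma>b A') = ori (\<Gamma>b B) \<and> ori (\<Gamma>b B) = ori (\<Gamma>b C))"
    by (rule three_same[OF R P(2)]) (use P in auto)
  have z1: "\<not> (ori (\<Gamma>b A) = ori (\<Gamma>b B') \<and> ori (\<Gamma>b B') = ori (\<Gamma>b C))"
    by (rule three_same[OF R P(3)]) (use P in auto)
  have z2: "\<not> (ori (\<Gamma>b A') = ori (\<Gamma>b B') \<and> ori (\<Gamma>b B') = ori (\<Gamma>b C))"
    by (rule three_same[OF R P(3)]) (use P in auto)
  show ?thesis
    using x1 x2 x3 x4 y1 y2 y3 z1 z2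
    by (cases "ori (\<Gamma>b A)"; cases "ori (\<Gamma>b A')"; cases "ori (\<Gamma>b B)"; cases "ori (\<Gamma>b B')"; cases "ori (\<Gamma>b C)") auto
qed

end
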